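(* Let $A$ be an operator on a Banach space $X$ that admits a $\mathcal B$-calculus. Then \[\sup_{\alpha>0}\alpha\int_{\mathbb R}\big|\langle(\alpha+i\beta+A)^{-2}x,x^*\rangle\big|\,d\beta<\infty\quad\text{for all }x\in X,\ x^*\in X^*.\]
   Context: $\mathbb C_+=\{z:\Re z>0\}$. $\mathcal B$ is the Banach algebra of holomorphic $f$ on $\mathbb C_+$ with $\|f\|_{\mathcal B_0}:=\int_0^\infty\sup_{\beta\in\mathbb R}|f'(\alpha+i\beta)|\,d\alpha<\infty$, with norm $\|f\|_{\mathcal B}=\sup_{\mathbb C_+}|f|+\|f\|_{\mathcal B_0}$. For $z\in\mathbb C_+$, $r_z(\lambda)=(z+\lambda)^{-1}$ ($r_z\in\mathcal B$). An operator $A$ on $X$ admits a $\mathcal B$-calculus if $A$ is densely defined, $\sigma(A)\subset\overline{\mathbb C}_+$, and there is a bounded algebra homomorphism $\Phi:\mathcal B\to L(X)$ with $\Phi(r_z)=(z+A)^{-1}$ for all $z\in\mathbb C_+$. *)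

theory Defs
  imports "HOL-Analysis.Analysis"
begin

class complex_banach = banach +
  fixes cscale :: "complex \<Rightarrow> 'a \<Rightarrow> 'a"
  assumes cscale_add_right: "cscale c (x + y) = cscale c x + cscale c y"
    and cscale_add_left: "cscale (a + b) x = cscale a x + cscale b x"
    and cscale_cscale: "cscale a (cscale b x) = cscale (a * b) x"
    and cscale_of_real: "cscale (complex_of_real r) x = scaleR r x"
    and norm_cscale: "norm (cscale c x) = cmod c * norm x"

definition cbl_op :: "('a::complex_banach \<Rightarrow> 'a) \<Rightarrow> bool" where
  "cbl_op T \<longleftrightarrow> bounded_linear T \<and> (\<forall>c x. T (cscale c x) = cscale c (T x))"

definition cbl_fun :: "('a::complex_banach \<Rightarrow> complex) \<Rightarrow> bool" where
  "cbl_fun \<phi> \<longleftrightarrow> bounded_linear \<phi> \<and> (\<forall>c x. \<phi> (cscale c x) = c * \<phi> x)"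

definition densely_defined_op :: "'a::complex_banach set \<Rightarrow> ('a \<Rightarrow> 'a) \<Rightarrow> bool" where
  "densely_defined_op D A \<longleftrightarrow>
     0 \<in> D \<and> (\<forall>x\<in>D. \<forall>y\<in>D. x + y \<in> D) \<and> (\<forall>c. \<forall>x\<in>D. cscale c x \<in> D) \<and>
     (\<forall>x\<in>D. \<forall>y\<in>D. A (x + y) = A x + A y) \<and> (\<forall>c. \<forall>x\<in>D. A (cscale c x) = cscale c (A x)) \<and>
     closure D = UNIV"

definition resolvent_set :: "'a::complex_banach set \<Rightarrow> ('a \<Rightarrow> 'a) \<Rightarrow> complex set" where
  "resolvent_set D A = {l. \<exists>R. cbl_op R \<and>
      (\<forall>y. R y \<in> D \<and> cscale l (R y) - A (R y) = y) \<and>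
      (\<forall>x\<in>D. R (cscale l x - A x) = x)}"

definition op_spectrum :: "'a::complex_banach set \<Rightarrow> ('a \<Rightarrow> 'a) \<Rightarrow> complex set" where
  "op_spectrum D A = - resolvent_set D A"

definition res_inv :: "'a::complex_banach set \<Rightarrow> ('a \<Rightarrow> 'a) \<Rightarrow> complex \<Rightarrow> 'a \<Rightarrow> 'a" where
  "res_inv D A z y = (THE u. u \<in> D \<and> cscale z u + A u = y)"

definition rhp :: "complex set" where
  "rhp = {z. 0 < Re z}"

definition B0_norm :: "(complex \<Rightarrow> complex) \<Rightarrow> ennreal" where
  "B0_norm f = (\<integral>\<^sup>+ \<alpha>. indicator {0<..} \<alpha> *
       (SUP \<beta>. ennreal (cmod (deriv f (Complex \<alpha> \<beta>)))) \<partial>lborel)"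

definition B_alg :: "(complex \<Rightarrow> complex) set" where
  "B_alg = {f. f holomorphic_on rhp \<and> bounded (f ` rhp) \<and> B0_norm f < \<infinity>}"

definition B_norm :: "(complex \<Rightarrow> complex) \<Rightarrow> real" where
  "B_norm f = (SUP z\<in>rhp. cmod (f z)) + enn2real (B0_norm f)"

definition r_fun :: "complex \<Rightarrow> complex \<Rightarrow> complex" where
  "r_fun z = (\<lambda>w. inverse (z + w))"

text \<open>Bounded algebra homomorphism \<Phi> : B \<rightarrow> L(X). Elements of B are functions on the
  half-plane, so \<Phi> f may depend only on the restriction of f to rhp.\<close>
definition bounded_alg_hom_B :: "((complex \<Rightarrow> complex) \<Rightarrow> 'a::complex_banach \<Rightarrow> 'a) \<Rightarrow> bool" where
  "bounded_alg_hom_B \<Phi> \<longleftrightarrow>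
     (\<forall>f\<in>B_alg. cbl_op (\<Phi> f)) \<and>
     (\<forall>f\<in>B_alg. \<forall>g\<in>B_alg. (\<forall>z\<in>rhp. f z = g z) \<longrightarrow> \<Phi> f = \<Phi> g) \<and>
     (\<forall>f\<in>B_alg. \<forall>g\<in>B_alg. \<Phi> (\<lambda>z. f z + g z) = (\<lambda>x. \<Phi> f x + \<Phi> g x)) \<and>
     (\<forall>c. \<forall>f\<in>B_alg. \<Phi> (\<lambda>z. c * f z) = (\<lambda>x. cscale c (\<Phi> f x))) \<and>
     (\<forall>f\<in>B_alg. \<forall>g\<in>B_alg. \<Phi> (\<lambda>z. f z * g z) = \<Phi> f \<circ> \<Phi> g) \<and>
     (\<exists>M. \<forall>f\<in>B_alg. \<forall>x. norm (\<Phi> f x) \<le> M * B_norm f * norm x)"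

definition admits_B_calculus :: "'a::complex_banach set \<Rightarrow> ('a \<Rightarrow> 'a) \<Rightarrow> bool" where
  "admits_B_calculus D A \<longleftrightarrow>
     densely_defined_op D A \<and>
     op_spectrum D A \<subseteq> {l. 0 \<le> Re l} \<and>
     (\<exists>\<Phi>. bounded_alg_hom_B \<Phi> \<and> (\<forall>z\<in>rhp. \<Phi> (r_fun z) = res_inv D A z))"

end

theory Submission
  imports Defs
begin

lemma int_powr:
  fixes c p :: real
  assumes c: "c > 0" and p: "p > 1"
  shows "(\<integral>\<^sup>+ a. indicator {0<..} a * ennreal ((c + a) powr (-p)) \<partial>lborel) \<le> ennreal (c powr (1-p) / (p-1))"
proof -
  define f where "f = (\<lambda>u::real. indicator {c<..} u * ennreal (u powr (-p)))"
  have fm: "f \<in> borel_measurable borel" unfolding f_def by measurable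
  have "(\<integral>\<^sup>+ a. indicator {0<..} a * ennreal ((c + a) powr (-p)) \<partial>lborel) = (\<integral>\<^sup>+ a. f (c + 1 * a) \<partial>lborel)"
    by (intro nn_integral_cong) (auto simp: f_def indicator_def)
  also have "\<dots> = (\<integral>\<^sup>+ a. f a \<partial>lborel)"
    using nn_integral_real_affine[OF fm, of 1 c] by simp
  also have "\<dots> \<le> (\<integral>\<^sup>+ a. ennreal (indicator {c..} a * a powr (-p)) \<partial>lborel)"
    by (intro nn_integral_mono) (auto simp: f_def indicator_def)
  also have "\<dots> = ennreal (-(c powr (-p+1)) / (-p+1))"
    by (rule nn_integral_has_integral_lebesgue[where \<Omega>="{c..}"]) (use c p has_integral_powr_to_inf[of "-p" c] in auto)
  also have "-(c powr (-p+1)) / (-p+1) = c powr (1-p) / (p-1)"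
  proof -
    have "p - 1 \<noteq> 0" "1 - p \<noteq> 0" using p by auto
    then show ?thesis by (simp add: field_simps)
  qed
  finally show ?thesis by simp
qed

lemma lat_sum:
  fixes \<phi> :: "nat \<Rightarrow> real" and J :: "int set"
  assumes nn: "\<And>n. 0 \<le> \<phi> n" and sm: "summable \<phi>" and J: "finite J"
  shows "(\<Sum>j\<in>J. \<phi> (nat \<bar>j\<bar>)) \<le> 2 * suminf \<phi>"
proof -
  define Jp where "Jp = {j\<in>J. 0 \<le> j}"
  define Jn where "Jn = {j\<in>J. j < 0}"
  have JJ: "J = Jp \<union> Jn" "Jp \<inter> Jn = {}" unfolding Jp_def Jn_def by auto
  have fin: "finite Jp" "finite Jn" using J unfolding Jp_def Jn_def by auto
  have "(\<Sum>j\<in>J. \<phi> (nat \<bar>j\<bar>)) = (\<Sum>j\<in>Jp. \<phi> (nat \<bar>j\<bar>)) + (\<Sum>j\<in>Jn. \<phi> (nat \<bar>j\<bar>))"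
    using JJ fin by (simp add: sum.union_disjoint)
  also have "(\<Sum>j\<in>Jp. \<phi> (nat \<bar>j\<bar>)) = (\<Sum>n\<in>(\<lambda>j. nat \<bar>j\<bar>) ` Jp. \<phi> n)"
    by (subst sum.reindex) (auto simp: inj_on_def Jp_def)
  also have "\<dots> \<le> suminf \<phi>"
    using fin by (intro sum_le_suminf sm) (auto simp: nn)
  also have "(\<Sum>j\<in>Jn. \<phi> (nat \<bar>j\<bar>)) = (\<Sum>n\<in>(\<lambda>j. nat \<bar>j\<bar>) ` Jn. \<phi> n)"
    by (subst sum.reindex) (auto simp: inj_on_def Jn_def)
  also have "\<dots> \<le> suminf \<phi>"
    using fin by (intro sum_le_suminf sm) (auto simp: nn)
  finally show ?thesis by simp
qed

definition phi1 :: "nat \<Rightarrow> real" where "phi1 n = 1 / (1 + real n ^ 2)"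
definition phi2 :: "nat \<Rightarrow> real" where "phi2 n = (1 + real n ^ 2) powr (-3/4)"

lemma phi_summable: "summable phi1" "summable phi2"
proof -
  have s2: "summable (\<lambda>n. real n powr (-2))" by (subst summable_real_powr_iff) simp
  have s32: "summable (\<lambda>n. real n powr (-3/2))" by (subst summable_real_powr_iff) simp
  show "summable phi1"
  proof (rule summable_comparison_test'[OF s2, of 1])
    fix n :: nat assume "1 \<le> n"
    then have "real n powr (-2) = 1 / real n ^ 2" by (simp add: powr_minus powr_realpow divide_inverse)
    moreover have "1 / (1 + real n ^ 2) \<le> 1 / real n ^ 2" using \<open>1 \<le> n\<close>
      by (intro divide_left_mono mult_pos_pos) (auto simp: add_pos_nonneg)
    ultimately show "norm (phi1 n) \<le> real n powr (-2)" by (simp add: phi1_def)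
  qed
  show "summable phi2"
  proof (rule summable_comparison_test'[OF s32, of 1])
    fix n :: nat assume "1 \<le> n"
    have "(1 + real n ^ 2) powr (-3/4) \<le> (real n ^ 2) powr (-3/4)"
      using \<open>1 \<le> n\<close> by (intro powr_mono2') auto
    also have "(real n ^ 2) powr (-3/4) = real n powr (-3/2)"
    proof -
      have "real n ^ 2 = real n powr 2" using \<open>1 \<le> n\<close> by (simp add: powr_numeral)
      then show ?thesis using powr_powr[of "real n" 2 "-3/4"] by simp
    qed
    finally show "norm (phi2 n) \<le> real n powr (-3/2)" by (simp add: phi2_def)
  qed
qed

lemma phi_nonneg: "0 \<le> phi1 n" "0 \<le> phi2 n" by (auto simp: phi1_def phi2_def)

lemma aux_lin: fixes D X E :: real assumes "D \<le> 2*X + 2*E" "E \<le> 1/4" "0 \<le> X"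
  shows "(1 + D) / 4 \<le> 1 + X" using assms by (simp add: field_simps)

lemma lat_basic:
  fixes \<alpha> A y :: real and k k0 :: int
  assumes a: "\<alpha> > 0" "\<alpha> \<le> A" and k0: "k0 = round (-(y/\<alpha>))"
  shows "\<alpha>^2 * (1 + real (nat \<bar>k - k0\<bar>) ^ 2) / 4 \<le> A^2 + (y + of_int k * \<alpha>)^2"
proof -
  define d where "d = real_of_int (k - k0)"
  define e where "e = y/\<alpha> + of_int k0"
  have e: "\<bar>e\<bar> \<le> 1/2" unfolding e_def k0 using of_int_round_abs_le[of "-(y/\<alpha>)"] by linarith
  have dd: "real (nat \<bar>k - k0\<bar>) ^ 2 = d^2" unfolding d_def by simp
  have u: "y + of_int k * \<alpha> = \<alpha> * (d + e)" unfolding d_def e_def using a by (simp add: field_simps)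
  have "\<bar>e\<bar>^2 \<le> (1/2)^2" using e by (intro power_mono) auto
  then have ee: "e^2 \<le> 1/4" by (simp add: power2_eq_square)
  have eq: "2*(d+e)^2 + 2*e^2 - d^2 = (d+2*e)^2" by (simp add: power2_eq_square algebra_simps)
  have "d^2 \<le> 2 * (d+e)^2 + 2 * e^2" using eq zero_le_power2[of "d+2*e"] by linarith
  then have "(1 + d^2) / 4 \<le> 1 + (d+e)^2" by (rule aux_lin[OF _ ee zero_le_power2])
  then have "\<alpha>^2 * ((1 + d^2) / 4) \<le> \<alpha>^2 * (1 + (d+e)^2)" by (intro mult_left_mono) auto
  also have "\<dots> = \<alpha>^2 + (y + of_int k * \<alpha>)^2" unfolding u by (simp add: algebra_simps power2_eq_square)
  also have "\<dots> \<le> A^2 + (y + of_int k * \<alpha>)^2" using a by (simp add: power_mono)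
  finally show ?thesis unfolding dd by simp
qed

lemma lat_term1:
  fixes \<alpha> A y :: real and k k0 :: int
  assumes a: "\<alpha> > 0" "\<alpha> \<le> A" and k0: "k0 = round (-(y/\<alpha>))"
  shows "1 / (A^2 + (y + of_int k * \<alpha>)^2) \<le> 4 / \<alpha>^2 * phi1 (nat \<bar>k - k0\<bar>)"
proof -
  have b: "\<alpha>^2 * (1 + real (nat \<bar>k - k0\<bar>) ^ 2) / 4 \<le> A^2 + (y + of_int k * \<alpha>)^2" by (rule lat_basic[OF a k0])
  have p: "0 < \<alpha>^2 * (1 + real (nat \<bar>k - k0\<bar>) ^ 2) / 4" using a by (simp add: add_pos_nonneg)
  have "1 / (A^2 + (y + of_int k * \<alpha>)^2) \<le> 1 / (\<alpha>^2 * (1 + real (nat \<bar>k - k0\<bar>) ^ 2) / 4)"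
    by (rule divide_left_mono[OF b]) (use p b in auto)
  also have "\<dots> = 4 / \<alpha>^2 * phi1 (nat \<bar>k - k0\<bar>)" by (simp add: phi1_def)
  finally show ?thesis .
qed

lemma lat_term3:
  fixes \<alpha> A y :: real and k k0 :: int
  assumes a: "\<alpha> > 0" "\<alpha> \<le> A" and k0: "k0 = round (-(y/\<alpha>))"
  shows "(A^2 + (y + of_int k * \<alpha>)^2) powr (-3/2) \<le> 4 * (A powr (-3/2) * \<alpha> powr (-3/2)) * phi2 (nat \<bar>k - k0\<bar>)"
proof -
  define \<rho> where "\<rho> = A^2 + (y + of_int k * \<alpha>)^2"
  define V where "V = \<alpha>^2 * (1 + real (nat \<bar>k - k0\<bar>) ^ 2) / 4"
  have b: "V \<le> \<rho>" unfolding V_def \<rho>_def by (rule lat_basic[OF a k0])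
  have Vp: "0 < V" using a by (simp add: V_def add_pos_nonneg)
  have Ap: "0 < A^2" using a by simp
  have bA: "A^2 \<le> \<rho>" unfolding \<rho>_def by simp
  have "\<rho> powr (-3/2) = \<rho> powr (-3/4) * \<rho> powr (-3/4)"
    using powr_add[of \<rho> "-3/4" "-3/4"] by simp
  also have "\<dots> \<le> (A^2) powr (-3/4) * V powr (-3/4)"
    by (intro mult_mono powr_mono2' b bA Vp Ap) auto
  also have "(A^2) powr (-3/4) = A powr (-3/2)"
  proof -
    have "A^2 = A powr 2" using a by (simp add: powr_numeral)
    then show ?thesis using powr_powr[of A 2 "-3/4"] by simp
  qed
  also have "V powr (-3/4) \<le> \<alpha> powr (-3/2) * phi2 (nat \<bar>k - k0\<bar>) * 4"
  proof -
    define J where "J = 1 + real (nat \<bar>k - k0\<bar>) ^ 2"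
    have Jp: "0 < J" unfolding J_def by (simp add: add_pos_nonneg)
    have VV: "V = \<alpha>^2 * J * (1/4)" unfolding V_def J_def by simp
    have "V powr (-3/4) = (\<alpha>^2) powr (-3/4) * J powr (-3/4) * (1/4) powr (-3/4)"
      unfolding VV by (simp only: powr_mult)
    also have "(\<alpha>^2) powr (-3/4) = \<alpha> powr (-3/2)"
    proof -
      have "\<alpha>^2 = \<alpha> powr 2" using a by (simp add: powr_numeral)
      then show ?thesis using powr_powr[of \<alpha> 2 "-3/4"] by simp
    qed
    also have "(1/4::real) powr (-3/4) \<le> (1/4) powr (-1)"
      by (rule powr_mono') auto
    then have "(1/4::real) powr (-3/4) \<le> 4" by simp
    then have "\<alpha> powr (-3/2) * J powr (-3/4) * (1/4) powr (-3/4) \<le> \<alpha> powr (-3/2) * J powr (-3/4) * 4"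
      by (intro mult_left_mono) auto
    finally show ?thesis unfolding J_def phi2_def .
  qed
  then have "A powr (-3/2) * V powr (-3/4) \<le> A powr (-3/2) * (\<alpha> powr (-3/2) * phi2 (nat \<bar>k - k0\<bar>) * 4)"
    by (intro mult_left_mono) auto
  finally show ?thesis unfolding \<rho>_def by (simp add: mult_ac)
qed

definition zk :: "real \<Rightarrow> real \<Rightarrow> int \<Rightarrow> complex" where
  "zk \<alpha> t k = Complex \<alpha> (t + of_int k * \<alpha>)"

definition FF :: "real \<Rightarrow> real \<Rightarrow> int set \<Rightarrow> (int \<Rightarrow> complex) \<Rightarrow> complex \<Rightarrow> complex" where
  "FF \<alpha> t K c = (\<lambda>w. \<Sum>k\<in>K. c k * (r_fun (zk \<alpha> t k) w * r_fun (zk \<alpha> t k) w))"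

lemma rhp_iff: "w \<in> rhp \<longleftrightarrow> 0 < Re w" by (simp add: rhp_def)

lemma open_rhp: "open rhp"
  unfolding rhp_def using open_halfspace_Re_gt[of 0] by simp

lemma zk_mod2:
  assumes "\<alpha> > 0"
  shows "cmod (zk \<alpha> t k + w)^2 = (\<alpha> + Re w)^2 + ((t + Im w) + of_int k * \<alpha>)^2"
  unfolding zk_def cmod_power2 by (simp add: algebra_simps)

lemma zk_nz: "\<alpha> > 0 \<Longrightarrow> w \<in> rhp \<Longrightarrow> zk \<alpha> t k + w \<noteq> 0"
  unfolding zk_def rhp_def by (auto simp: complex_eq_iff)

lemma sum_reindex_shift:
  fixes K :: "int set" and \<psi> :: "int \<Rightarrow> real"
  assumes "finite K"
  shows "(\<Sum>k\<in>K. \<psi> (k - k0)) = (\<Sum>j\<in>(\<lambda>k. k - k0) ` K. \<psi> j)"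
  by (subst sum.reindex) (auto simp: inj_on_def)

lemma FF_sup_bound:
  assumes a: "\<alpha> > 0" and K: "finite K" and c: "\<And>k. cmod (c k) \<le> 1" and w: "w \<in> rhp"
  shows "cmod (FF \<alpha> t K c w) \<le> 8 / \<alpha>^2 * suminf phi1"
proof -
  define A where "A = \<alpha> + Re w"
  define y where "y = t + Im w"
  define k0 where "k0 = round (-(y/\<alpha>))"
  have Aa: "\<alpha> \<le> A" using w unfolding A_def rhp_def by simp
  have "cmod (FF \<alpha> t K c w) \<le> (\<Sum>k\<in>K. cmod (c k * (r_fun (zk \<alpha> t k) w * r_fun (zk \<alpha> t k) w)))"
    unfolding FF_def by (rule norm_sum)
  also have "\<dots> \<le> (\<Sum>k\<in>K. 1 / (A^2 + (y + of_int k * \<alpha>)^2))"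
  proof (rule sum_mono)
    fix k assume "k \<in> K"
    have "cmod (c k * (r_fun (zk \<alpha> t k) w * r_fun (zk \<alpha> t k) w)) = cmod (c k) / cmod (zk \<alpha> t k + w)^2"
      unfolding r_fun_def by (simp add: norm_mult norm_inverse power2_eq_square divide_inverse)
    also have "\<dots> \<le> 1 / cmod (zk \<alpha> t k + w)^2"
      by (intro divide_right_mono c) auto
    also have "\<dots> = 1 / (A^2 + (y + of_int k * \<alpha>)^2)"
      unfolding zk_mod2[OF a] A_def y_def ..
    finally show "cmod (c k * (r_fun (zk \<alpha> t k) w * r_fun (zk \<alpha> t k) w)) \<le> 1 / (A^2 + (y + of_int k * \<alpha>)^2)" .
  qed
  also have "\<dots> \<le> (\<Sum>k\<in>K. 4 / \<alpha>^2 * phi1 (nat \<bar>k - k0\<bar>))"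
    by (intro sum_mono lat_term1[OF a Aa k0_def])
  also have "\<dots> = 4 / \<alpha>^2 * (\<Sum>k\<in>K. phi1 (nat \<bar>k - k0\<bar>))"
    by (simp add: sum_distrib_left)
  also have "(\<Sum>k\<in>K. phi1 (nat \<bar>k - k0\<bar>)) = (\<Sum>j\<in>(\<lambda>k. k - k0) ` K. phi1 (nat \<bar>j\<bar>))"
    by (rule sum_reindex_shift[OF K])
  also have "4 / \<alpha>^2 * (\<Sum>j\<in>(\<lambda>k. k - k0) ` K. phi1 (nat \<bar>j\<bar>)) \<le> 4 / \<alpha>^2 * (2 * suminf phi1)"
    by (intro mult_left_mono lat_sum phi_nonneg phi_summable finite_imageI K) auto
  finally show ?thesis by simp
qed

lemma aux_alg: fixes u c :: complex
  shows "c * (inverse u * (- (1 * inverse (u ^ Suc (Suc 0)))) + (- (1 * inverse (u ^ Suc (Suc 0)))) * inverse u)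
     = c * (-2 * inverse u ^ 3)"
proof -
  have "inverse (u ^ Suc (Suc 0)) = inverse u * inverse u" by (simp add: power2_eq_square inverse_mult_distrib)
  then show ?thesis by (simp add: power3_eq_cube)
qed

lemma FF_deriv:
  assumes a: "\<alpha> > 0" and w: "w \<in> rhp"
  shows "(FF \<alpha> t K c has_field_derivative (\<Sum>k\<in>K. c k * (-2 * inverse (zk \<alpha> t k + w) ^ 3))) (at w)"
proof -
  have "((\<lambda>w. c k * (inverse (zk \<alpha> t k + w) * inverse (zk \<alpha> t k + w))) has_field_derivative
         c k * (-2 * inverse (zk \<alpha> t k + w) ^ 3)) (at w)" for k
  proof -
    have nz: "zk \<alpha> t k + w \<noteq> 0" by (rule zk_nz[OF a w])
    have h: "((\<lambda>w. zk \<alpha> t k + w) has_field_derivative 1) (at w)"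
      by (auto intro!: derivative_eq_intros)
    have hi: "((\<lambda>w. inverse (zk \<alpha> t k + w)) has_field_derivative
        - (1 * inverse ((zk \<alpha> t k + w) ^ Suc (Suc 0)))) (at w)"
      by (rule DERIV_inverse_fun[OF h nz])
    have hm: "((\<lambda>w. inverse (zk \<alpha> t k + w) * inverse (zk \<alpha> t k + w)) has_field_derivative
        inverse (zk \<alpha> t k + w) * (- (1 * inverse ((zk \<alpha> t k + w) ^ Suc (Suc 0))))
        + (- (1 * inverse ((zk \<alpha> t k + w) ^ Suc (Suc 0)))) * inverse (zk \<alpha> t k + w)) (at w)"
      by (rule DERIV_mult'[OF hi hi])
    show ?thesis
      by (rule DERIV_cong[OF DERIV_cmult[OF hm]]) (rule aux_alg)
  qed
  then show ?thesis unfolding FF_def r_fun_def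
    by (intro DERIV_sum) auto
qed

lemma inv_cube_powr: fixes x :: real assumes "x > 0" shows "inverse x ^ 3 = (x^2) powr (-3/2)"
proof -
  have "x^2 = x powr 2" using assms by (simp add: powr_numeral)
  then have "(x^2) powr (-3/2) = x powr (-3)" using powr_powr[of x 2 "-3/2"] by simp
  also have "\<dots> = inverse (x powr 3)" by (simp add: powr_minus)
  also have "x powr 3 = x ^ 3" using assms by (simp add: powr_numeral)
  finally show ?thesis by (simp add: power_inverse)
qed

lemma FF_deriv_bound:
  assumes a: "\<alpha> > 0" and K: "finite K" and c: "\<And>k. cmod (c k) \<le> 1" and w: "w \<in> rhp"
  shows "cmod (deriv (FF \<alpha> t K c) w) \<le> 16 * suminf phi2 * (\<alpha> powr (-3/2) * (\<alpha> + Re w) powr (-3/2))"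
proof -
  define A where "A = \<alpha> + Re w"
  define y where "y = t + Im w"
  define k0 where "k0 = round (-(y/\<alpha>))"
  have Aa: "\<alpha> \<le> A" using w unfolding A_def rhp_def by simp
  have eq: "deriv (FF \<alpha> t K c) w = (\<Sum>k\<in>K. c k * (-2 * inverse (zk \<alpha> t k + w) ^ 3))"
    by (rule DERIV_imp_deriv[OF FF_deriv[OF a w]])
  have "cmod (deriv (FF \<alpha> t K c) w) \<le> (\<Sum>k\<in>K. cmod (c k * (-2 * inverse (zk \<alpha> t k + w) ^ 3)))"
    unfolding eq by (rule norm_sum)
  also have "\<dots> \<le> (\<Sum>k\<in>K. 2 * (A^2 + (y + of_int k * \<alpha>)^2) powr (-3/2))"
  proof (rule sum_mono)
    fix k assume "k \<in> K"
    have nz: "zk \<alpha> t k + w \<noteq> 0" by (rule zk_nz[OF a w])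
    have "cmod (c k * (-2 * inverse (zk \<alpha> t k + w) ^ 3)) = cmod (c k) * (2 * inverse (cmod (zk \<alpha> t k + w)) ^ 3)"
      by (simp add: norm_mult norm_power norm_inverse)
    also have "\<dots> \<le> 1 * (2 * inverse (cmod (zk \<alpha> t k + w)) ^ 3)"
      by (intro mult_right_mono c) auto
    also have "inverse (cmod (zk \<alpha> t k + w)) ^ 3 = (cmod (zk \<alpha> t k + w)^2) powr (-3/2)"
      using nz by (intro inv_cube_powr) auto
    also have "cmod (zk \<alpha> t k + w)^2 = A^2 + (y + of_int k * \<alpha>)^2"
      unfolding zk_mod2[OF a] A_def y_def ..
    finally show "cmod (c k * (-2 * inverse (zk \<alpha> t k + w) ^ 3)) \<le> 2 * (A^2 + (y + of_int k * \<alpha>)^2) powr (-3/2)"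
      by simp
  qed
  also have "\<dots> \<le> (\<Sum>k\<in>K. 2 * (4 * (A powr (-3/2) * \<alpha> powr (-3/2)) * phi2 (nat \<bar>k - k0\<bar>)))"
    by (intro sum_mono mult_left_mono lat_term3[OF a Aa k0_def]) auto
  also have "\<dots> = 8 * (A powr (-3/2) * \<alpha> powr (-3/2)) * (\<Sum>k\<in>K. phi2 (nat \<bar>k - k0\<bar>))"
    by (unfold sum_distrib_left) (rule sum.cong, simp_all add: mult_ac)
  also have "(\<Sum>k\<in>K. phi2 (nat \<bar>k - k0\<bar>)) = (\<Sum>j\<in>(\<lambda>k. k - k0) ` K. phi2 (nat \<bar>j\<bar>))"
    by (rule sum_reindex_shift[OF K])
  also have "8 * (A powr (-3/2) * \<alpha> powr (-3/2)) * (\<Sum>j\<in>(\<lambda>k. k - k0) ` K. phi2 (nat \<bar>j\<bar>))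
      \<le> 8 * (A powr (-3/2) * \<alpha> powr (-3/2)) * (2 * suminf phi2)"
    by (intro mult_left_mono lat_sum phi_nonneg phi_summable finite_imageI K) auto
  finally show ?thesis unfolding A_def by (simp add: mult_ac)
qed

lemma FF_B0:
  assumes a: "\<alpha> > 0" and K: "finite K" and c: "\<And>k. cmod (c k) \<le> 1"
  shows "B0_norm (FF \<alpha> t K c) \<le> ennreal (32 * suminf phi2 * \<alpha> powr (-2))"
proof -
  define E where "E = 16 * suminf phi2 * \<alpha> powr (-3/2)"
  have S2: "0 \<le> suminf phi2" by (intro suminf_nonneg phi_summable phi_nonneg)
  have E0: "0 \<le> E" unfolding E_def using S2 by simp
  have "B0_norm (FF \<alpha> t K c) \<le> (\<integral>\<^sup>+ x. ennreal E * (indicator {0<..} x * ennreal ((\<alpha> + x) powr (-3/2))) \<partial>lborel)"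
    unfolding B0_norm_def
  proof (intro nn_integral_mono)
    fix x :: real
    show "indicator {0<..} x * (SUP \<beta>. ennreal (cmod (deriv (FF \<alpha> t K c) (Complex x \<beta>))))
        \<le> ennreal E * (indicator {0<..} x * ennreal ((\<alpha> + x) powr (-3/2)))"
    proof (cases "x > 0")
      case True
      have "(SUP \<beta>. ennreal (cmod (deriv (FF \<alpha> t K c) (Complex x \<beta>)))) \<le> ennreal (E * (\<alpha> + x) powr (-3/2))"
      proof (rule SUP_least)
        fix \<beta>
        have "Complex x \<beta> \<in> rhp" using True by (simp add: rhp_def)
        from FF_deriv_bound[OF a K c this]
        show "ennreal (cmod (deriv (FF \<alpha> t K c) (Complex x \<beta>))) \<le> ennreal (E * (\<alpha> + x) powr (-3/2))"
          by (intro ennreal_leI) (simp add: E_def mult_ac)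
      qed
      then show ?thesis using True E0 by (simp add: ennreal_mult)
    qed simp
  qed
  also have "\<dots> = ennreal E * (\<integral>\<^sup>+ x. indicator {0<..} x * ennreal ((\<alpha> + x) powr (-3/2)) \<partial>lborel)"
    by (rule nn_integral_cmult) measurable
  also have "\<dots> \<le> ennreal E * ennreal (\<alpha> powr (1 - 3/2) / (3/2 - 1))"
  proof -
    have eqm: "-(3/2::real) = -3/2" by simp
    show ?thesis by (rule mult_left_mono[OF int_powr[OF a, of "3/2", unfolded eqm]]) auto
  qed
  also have "\<dots> = ennreal (32 * suminf phi2 * \<alpha> powr (-2))"
  proof -
    have "E * (\<alpha> powr (1 - 3/2) / (3/2 - 1)) = 32 * suminf phi2 * (\<alpha> powr (-3/2) * \<alpha> powr (-1/2))"
      unfolding E_def by simp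
    also have "\<alpha> powr (-3/2) * \<alpha> powr (-1/2) = \<alpha> powr (-2)"
      using powr_add[of \<alpha> "-3/2" "-1/2"] by simp
    finally have h: "E * (\<alpha> powr (1 - 3/2) / (3/2 - 1)) = 32 * suminf phi2 * \<alpha> powr (-2)" .
    show ?thesis unfolding ennreal_mult'[OF E0, symmetric] h ..
  qed
  finally show ?thesis .
qed

lemma enn2real_bound: "e \<le> ennreal x \<Longrightarrow> 0 \<le> x \<Longrightarrow> enn2real e \<le> x"
  using enn2real_mono[of e "ennreal x"] by simp

lemma rhp_ne: "rhp \<noteq> {}" unfolding rhp_def by (auto intro: exI[of _ 1])

lemma FF_B_alg:
  assumes a: "\<alpha> > 0" and K: "finite K" and c: "\<And>k. cmod (c k) \<le> 1"
  shows "FF \<alpha> t K c \<in> B_alg"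
    and "B_norm (FF \<alpha> t K c) \<le> 8 / \<alpha>^2 * suminf phi1 + 32 * suminf phi2 * \<alpha> powr (-2)"
proof -
  have hol: "FF \<alpha> t K c holomorphic_on rhp"
    unfolding holomorphic_on_open[OF open_rhp] using FF_deriv[OF a] by blast
  have bnd: "bounded (FF \<alpha> t K c ` rhp)"
    unfolding bounded_iff using FF_sup_bound[where c=c and t=t, OF a K c] by blast
  have B0: "B0_norm (FF \<alpha> t K c) < \<infinity>"
    using FF_B0[where c=c and t=t, OF a K c] by (simp add: le_less_trans)
  show "FF \<alpha> t K c \<in> B_alg" unfolding B_alg_def using hol bnd B0 by auto
  have S2: "0 \<le> suminf phi2" by (intro suminf_nonneg phi_summable phi_nonneg)
  have s: "(SUP z\<in>rhp. cmod (FF \<alpha> t K c z)) \<le> 8 / \<alpha>^2 * suminf phi1"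
    by (rule cSUP_least[OF rhp_ne FF_sup_bound[where c=c and t=t, OF a K c]])
  have e: "enn2real (B0_norm (FF \<alpha> t K c)) \<le> 32 * suminf phi2 * \<alpha> powr (-2)"
    by (rule enn2real_bound[OF FF_B0[where c=c and t=t, OF a K c]]) (use S2 in simp)
  show "B_norm (FF \<alpha> t K c) \<le> 8 / \<alpha>^2 * suminf phi1 + 32 * suminf phi2 * \<alpha> powr (-2)"
    unfolding B_norm_def using s e by linarith
qed

lemma r_fun_B_alg:
  assumes z: "0 < Re z"
  shows "r_fun z \<in> B_alg"
proof -
  have nz: "z + w \<noteq> 0" if "w \<in> rhp" for w using that z by (auto simp: rhp_def complex_eq_iff)
  have der: "(r_fun z has_field_derivative - (1 * inverse ((z + w) ^ Suc (Suc 0)))) (at w)" if "w \<in> rhp" for w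
  proof -
    have h: "((\<lambda>w. z + w) has_field_derivative 1) (at w)" by (auto intro!: derivative_eq_intros)
    show ?thesis unfolding r_fun_def by (rule DERIV_inverse_fun[OF h nz[OF that]])
  qed
  have hol: "r_fun z holomorphic_on rhp"
    unfolding holomorphic_on_open[OF open_rhp] using der by blast
  have mb: "cmod (r_fun z w) \<le> inverse (Re z)" if "w \<in> rhp" for w
  proof -
    have "Re z \<le> Re (z + w)" using that by (simp add: rhp_def)
    also have "\<dots> \<le> cmod (z + w)" by (rule complex_Re_le_cmod)
    finally have "inverse (cmod (z + w)) \<le> inverse (Re z)" by (rule le_imp_inverse_le[OF _ z])
    then show ?thesis unfolding r_fun_def norm_inverse .
  qed
  have bnd: "bounded (r_fun z ` rhp)" unfolding bounded_iff using mb by auto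
  have "B0_norm (r_fun z) \<le> (\<integral>\<^sup>+ x. indicator {0<..} x * ennreal ((Re z + x) powr (-2)) \<partial>lborel)"
    unfolding B0_norm_def
  proof (intro nn_integral_mono)
    fix x :: real
    show "indicator {0<..} x * (SUP \<beta>. ennreal (cmod (deriv (r_fun z) (Complex x \<beta>))))
        \<le> indicator {0<..} x * ennreal ((Re z + x) powr (-2))"
    proof (cases "x > 0")
      case True
      have "(SUP \<beta>. ennreal (cmod (deriv (r_fun z) (Complex x \<beta>)))) \<le> ennreal ((Re z + x) powr (-2))"
      proof (rule SUP_least)
        fix \<beta>
        have w: "Complex x \<beta> \<in> rhp" using True by (simp add: rhp_def)
        have "cmod (deriv (r_fun z) (Complex x \<beta>)) = inverse (cmod (z + Complex x \<beta>)) ^ 2"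
          by (simp add: DERIV_imp_deriv[OF der[OF w]] norm_mult norm_inverse norm_power power2_eq_square)
        also have "\<dots> \<le> inverse (Re z + x) ^ 2"
        proof -
          have "Re z + x \<le> cmod (z + Complex x \<beta>)"
            using complex_Re_le_cmod[of "z + Complex x \<beta>"] by simp
          then show ?thesis using z True by (intro power_mono le_imp_inverse_le) auto
        qed
        also have "\<dots> = (Re z + x) powr (-2)"
          using z True by (simp add: powr_minus powr_numeral power_inverse)
        finally show "ennreal (cmod (deriv (r_fun z) (Complex x \<beta>))) \<le> ennreal ((Re z + x) powr (-2))"
          by (rule ennreal_leI)
      qed
      then show ?thesis using True by simp
    qed simp
  qed
  also have "\<dots> \<le> ennreal (Re z powr (1 - 2) / (2 - 1))"
  proof -
    have eqm: "-(2::real) = -2" by simp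
    show ?thesis by (rule int_powr[OF z, of 2]) auto
  qed
  finally have "B0_norm (r_fun z) < \<infinity>" by (simp add: le_less_trans)
  then show ?thesis unfolding B_alg_def using hol bnd by auto
qed

lemma cell_iff:
  fixes \<alpha> \<beta> :: real assumes a: "\<alpha> > 0"
  shows "(\<beta> \<in> {of_int k * \<alpha> ..< (of_int k + 1) * \<alpha>}) \<longleftrightarrow> k = \<lfloor>\<beta>/\<alpha>\<rfloor>"
proof -
  have "k = \<lfloor>\<beta>/\<alpha>\<rfloor> \<longleftrightarrow> of_int k \<le> \<beta>/\<alpha> \<and> \<beta>/\<alpha> < of_int k + 1"
    by (metis floor_eq_iff)
  also have "\<dots> \<longleftrightarrow> of_int k * \<alpha> \<le> \<beta> \<and> \<beta> < (of_int k + 1) * \<alpha>"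
    using a by (simp add: pos_le_divide_eq pos_divide_less_eq)
  finally show ?thesis by simp
qed

lemma range_iff:
  fixes \<alpha> \<beta> :: real assumes a: "\<alpha> > 0"
  shows "(\<beta> \<in> {- (real N * \<alpha>) ..< real N * \<alpha>}) \<longleftrightarrow> \<lfloor>\<beta>/\<alpha>\<rfloor> \<in> {- int N ..< int N}"
proof -
  have "\<lfloor>\<beta>/\<alpha>\<rfloor> \<in> {- int N ..< int N} \<longleftrightarrow> - real N \<le> \<beta>/\<alpha> \<and> \<beta>/\<alpha> < real N"
    by (simp add: le_floor_iff floor_less_iff)
  also have "\<dots> \<longleftrightarrow> - (real N * \<alpha>) \<le> \<beta> \<and> \<beta> < real N * \<alpha>"
    using a by (simp add: pos_le_divide_eq pos_divide_less_eq)
  finally show ?thesis by simp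
qed

lemma indicator_split:
  fixes \<alpha> \<beta> :: real assumes a: "\<alpha> > 0"
  shows "(indicator {- (real N * \<alpha>) ..< real N * \<alpha>} \<beta> :: ennreal)
     = (\<Sum>k\<in>{- int N ..< int N}. indicator {of_int k * \<alpha> ..< (of_int k + 1) * \<alpha>} \<beta>)"
proof -
  have "(\<Sum>k\<in>{- int N ..< int N}. (indicator {of_int k * \<alpha> ..< (of_int k + 1) * \<alpha>} \<beta> :: ennreal))
      = (\<Sum>k\<in>{- int N ..< int N}. if k = \<lfloor>\<beta>/\<alpha>\<rfloor> then 1 else 0)"
    by (intro sum.cong refl) (simp only: indicator_def cell_iff[OF a] of_bool_def)
  also have "\<dots> = (if \<lfloor>\<beta>/\<alpha>\<rfloor> \<in> {- int N ..< int N} then 1 else 0)"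
    by (simp add: sum.delta)
  also have "\<dots> = indicator {- (real N * \<alpha>) ..< real N * \<alpha>} \<beta>"
    by (simp only: indicator_def range_iff[OF a] of_bool_def)
  finally show ?thesis by simp
qed

lemma periodic_bound_meas:
  fixes g :: "real \<Rightarrow> real" and s :: "real \<Rightarrow> ennreal"
  assumes a: "\<alpha> > 0" and B: "0 \<le> B"
    and gb: "\<And>t K. finite K \<Longrightarrow> (\<Sum>k\<in>K. g (t + of_int k * \<alpha>)) \<le> B"
    and g0: "\<And>x. 0 \<le> g x"
    and sm[measurable]: "s \<in> borel_measurable lborel" and sg: "\<And>x. s x \<le> ennreal (g x)"
  shows "(\<integral>\<^sup>+ x. s x \<partial>lborel) \<le> ennreal (\<alpha> * B)"
proof -
  define I where "I N = {- (real N * \<alpha>) ..< real N * \<alpha>}" for N :: nat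
  define f where "f N x = s x * indicator (I N) x" for N x
  have fm: "f N \<in> borel_measurable lborel" for N unfolding f_def I_def by measurable
  have inc: "incseq f"
  proof (rule incseq_SucI, rule le_funI)
    fix N x
    have "I N \<subseteq> I (Suc N)" unfolding I_def using a by (auto intro: order_trans[rotated] simp: field_simps)
    then show "f N x \<le> f (Suc N) x" unfolding f_def
      by (intro mult_left_mono) (auto simp: indicator_def)
  qed
  have sup: "(SUP N. f N x) = s x" for x
  proof (rule antisym)
    show "(SUP N. f N x) \<le> s x" unfolding f_def by (intro SUP_least) (auto simp: indicator_def)
    obtain N :: nat where N: "\<bar>x\<bar> / \<alpha> < real N" using reals_Archimedean2 by blast
    have "x \<in> I N"
    proof -
      have "\<bar>x\<bar> < real N * \<alpha>" using N a by (simp add: pos_divide_less_eq)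
      then show ?thesis unfolding I_def by auto
    qed
    then have "s x = f N x" unfolding f_def by simp
    then show "s x \<le> (SUP N. f N x)" by (metis SUP_upper UNIV_I)
  qed
  have "(\<integral>\<^sup>+ x. s x \<partial>lborel) = (\<integral>\<^sup>+ x. (SUP N. f N x) \<partial>lborel)" by (simp add: sup)
  also have "\<dots> = (SUP N. integral\<^sup>N lborel (f N))"
    by (rule nn_integral_monotone_convergence_SUP[OF inc fm])
  also have "\<dots> \<le> ennreal (\<alpha> * B)"
  proof (rule SUP_least)
    fix N :: nat
    define KK where "KK = {- int N ..< int N}"
    have fin: "finite KK" unfolding KK_def by simp
    define C where "C k = {of_int k * \<alpha> ..< (of_int k + 1) * \<alpha>}" for k :: int
    have "integral\<^sup>N lborel (f N) = (\<integral>\<^sup>+ x. (\<Sum>k\<in>KK. s x * indicator (C k) x) \<partial>lborel)"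
      unfolding f_def I_def KK_def C_def
      by (intro nn_integral_cong) (simp add: indicator_split[OF a] sum_distrib_left)
    also have "\<dots> = (\<Sum>k\<in>KK. \<integral>\<^sup>+ x. s x * indicator (C k) x \<partial>lborel)"
      by (rule nn_integral_sum) (simp add: C_def)
    also have "\<dots> = (\<Sum>k\<in>KK. \<integral>\<^sup>+ u. s (of_int k * \<alpha> + u) * indicator {0..<\<alpha>} u \<partial>lborel)"
    proof (rule sum.cong[OF refl])
      fix k assume "k \<in> KK"
      have m: "(\<lambda>x. s x * indicator (C k) x) \<in> borel_measurable borel" unfolding C_def by measurable
      have "(\<integral>\<^sup>+ x. s x * indicator (C k) x \<partial>lborel)
          = (\<integral>\<^sup>+ u. s (of_int k * \<alpha> + u) * indicator (C k) (of_int k * \<alpha> + u) \<partial>lborel)"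
        using nn_integral_real_affine[OF m, of 1 "of_int k * \<alpha>"] by simp
      also have "\<dots> = (\<integral>\<^sup>+ u. s (of_int k * \<alpha> + u) * indicator {0..<\<alpha>} u \<partial>lborel)"
        by (intro nn_integral_cong) (simp add: C_def indicator_def algebra_simps)
      finally show "(\<integral>\<^sup>+ x. s x * indicator (C k) x \<partial>lborel) = \<dots>" .
    qed
    also have "\<dots> = (\<integral>\<^sup>+ u. (\<Sum>k\<in>KK. s (of_int k * \<alpha> + u) * indicator {0..<\<alpha>} u) \<partial>lborel)"
      by (rule nn_integral_sum[symmetric]) measurable
    also have "\<dots> \<le> (\<integral>\<^sup>+ u. ennreal B * indicator {0..<\<alpha>} u \<partial>lborel)"
    proof (rule nn_integral_mono)
      fix u :: real
      have "(\<Sum>k\<in>KK. s (of_int k * \<alpha> + u)) \<le> (\<Sum>k\<in>KK. ennreal (g (u + of_int k * \<alpha>)))"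
        by (intro sum_mono) (simp add: sg add.commute)
      also have "\<dots> = ennreal (\<Sum>k\<in>KK. g (u + of_int k * \<alpha>))"
        by (rule sum_ennreal) (simp add: g0)
      also have "\<dots> \<le> ennreal B" by (intro ennreal_leI gb fin)
      finally have "(\<Sum>k\<in>KK. s (of_int k * \<alpha> + u)) * indicator {0..<\<alpha>} u \<le> ennreal B * indicator {0..<\<alpha>} u"
        by (rule mult_right_mono) simp
      then show "(\<Sum>k\<in>KK. s (of_int k * \<alpha> + u) * indicator {0..<\<alpha>} u) \<le> ennreal B * indicator {0..<\<alpha>} u"
        by (simp add: sum_distrib_right)
    qed
    also have "\<dots> = ennreal B * ennreal \<alpha>"
      using a by (subst nn_integral_cmult_indicator) auto
    also have "\<dots> = ennreal (\<alpha> * B)" using a B by (simp add: ennreal_mult mult.commute)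
    finally show "integral\<^sup>N lborel (f N) \<le> ennreal (\<alpha> * B)" .
  qed
  finally show ?thesis .
qed

lemma periodic_bound:
  fixes g :: "real \<Rightarrow> real"
  assumes a: "\<alpha> > 0" and B: "0 \<le> B"
    and gb: "\<And>t K. finite K \<Longrightarrow> (\<Sum>k\<in>K. g (t + of_int k * \<alpha>)) \<le> B"
    and g0: "\<And>x. 0 \<le> g x"
  shows "(\<integral>\<^sup>+ x. ennreal (g x) \<partial>lborel) \<le> ennreal (\<alpha> * B)"
  unfolding nn_integral_def
proof (rule SUP_least)
  fix s assume "s \<in> {s. simple_function lborel s \<and> s \<le> (\<lambda>x. ennreal (g x))}"
  then have s: "simple_function lborel s" "\<And>x. s x \<le> ennreal (g x)" by (auto simp: le_fun_def)
  have "integral\<^sup>S lborel s = integral\<^sup>N lborel s" by (rule nn_integral_eq_simple_integral[OF s(1), symmetric])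
  also have "\<dots> \<le> ennreal (\<alpha> * B)"
    by (rule periodic_bound_meas[OF a B gb g0 borel_measurable_simple_function[OF s(1)] s(2)])
  finally show "integral\<^sup>S lborel s \<le> ennreal (\<alpha> * B)" .
qed

lemma zk_rhp: "\<alpha> > 0 \<Longrightarrow> zk \<alpha> t k \<in> rhp" by (simp add: zk_def rhp_def)

lemma FF_single: "FF \<alpha> t {k} c = (\<lambda>w. c k * (r_fun (zk \<alpha> t k) w * r_fun (zk \<alpha> t k) w))"
  by (simp add: FF_def)

lemma FF_insert: "finite K \<Longrightarrow> k \<notin> K \<Longrightarrow>
   FF \<alpha> t (insert k K) c = (\<lambda>w. FF \<alpha> t {k} c w + FF \<alpha> t K c w)"
  by (simp add: FF_def)

lemma Phi_FF:
  assumes hom: "bounded_alg_hom_B \<Phi>" and res: "\<forall>z\<in>rhp. \<Phi> (r_fun z) = res_inv D A z"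
    and a: "\<alpha> > 0" and K: "finite K" and c: "\<And>k. cmod (c k) \<le> 1"
  shows "\<Phi> (FF \<alpha> t K c) x = (\<Sum>k\<in>K. cscale (c k) (res_inv D A (zk \<alpha> t k) (res_inv D A (zk \<alpha> t k) x)))"
  using K
proof (induction K arbitrary: x rule: finite_induct)
  case empty
  have rB: "r_fun 1 \<in> B_alg" by (rule r_fun_B_alg) simp
  have "FF \<alpha> t {} c = (\<lambda>z. 0 * r_fun 1 z)" by (simp add: FF_def)
  then have "\<Phi> (FF \<alpha> t {} c) x = cscale 0 (\<Phi> (r_fun 1) x)"
    using hom rB unfolding bounded_alg_hom_B_def by metis
  also have "\<dots> = 0" using cscale_of_real[of 0 "\<Phi> (r_fun 1) x"] by simp
  finally show ?case by simp
next
  case (insert k K)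
  define r where "r = r_fun (zk \<alpha> t k)"
  have rB: "r \<in> B_alg" unfolding r_def by (rule r_fun_B_alg) (simp add: zk_def a)
  have one: "\<And>j. cmod ((\<lambda>_. 1::complex) j) \<le> 1" by simp
  have hB: "(\<lambda>w. r w * r w) \<in> B_alg"
    using FF_B_alg(1)[where c="\<lambda>_. 1" and t=t and K="{k}", OF a _ one] by (simp add: FF_def r_def)
  have sB: "FF \<alpha> t {k} c \<in> B_alg" by (rule FF_B_alg(1)[where c=c, OF a _ c]) simp
  have KB: "FF \<alpha> t K c \<in> B_alg" by (rule FF_B_alg(1)[where c=c, OF a insert(1) c])
  have "\<Phi> (FF \<alpha> t (insert k K) c) x = \<Phi> (FF \<alpha> t {k} c) x + \<Phi> (FF \<alpha> t K c) x"
    unfolding FF_insert[OF insert(1,2)] using hom sB KB unfolding bounded_alg_hom_B_def by metis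
  also have "\<Phi> (FF \<alpha> t {k} c) x = cscale (c k) (\<Phi> (\<lambda>w. r w * r w) x)"
    unfolding FF_single r_def[symmetric] using hom hB unfolding bounded_alg_hom_B_def by metis
  also have "\<Phi> (\<lambda>w. r w * r w) = \<Phi> r \<circ> \<Phi> r"
    using hom rB unfolding bounded_alg_hom_B_def by metis
  also have "\<Phi> r = res_inv D A (zk \<alpha> t k)" unfolding r_def using res zk_rhp[OF a] by blast
  finally show ?case using insert by simp
qed

lemma cbl_fun_sum:
  assumes xs: "cbl_fun xs" and K: "finite K"
  shows "xs (\<Sum>k\<in>K. cscale (c k) (w k)) = (\<Sum>k\<in>K. c k * xs (w k))"
proof -
  interpret L: bounded_linear xs using xs by (simp add: cbl_fun_def)
  have sc: "\<And>c v. xs (cscale c v) = c * xs v" using xs by (simp add: cbl_fun_def)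
  show ?thesis using K by (induction K rule: finite_induct) (simp_all add: L.zero L.add sc)
qed

lemma B_norm_FF_nonneg:
  assumes a: "\<alpha> > 0" and K: "finite K" and c: "\<And>k. cmod (c k) \<le> 1"
  shows "0 \<le> B_norm (FF \<alpha> t K c)"
proof -
  have bdd: "bdd_above ((\<lambda>z. cmod (FF \<alpha> t K c z)) ` rhp)"
    by (rule bdd_aboveI2[OF FF_sup_bound[where c=c and t=t, OF a K c]])
  have "1 \<in> rhp" by (simp add: rhp_def)
  then have "0 \<le> (SUP z\<in>rhp. cmod (FF \<alpha> t K c z))"
    by (rule cSUP_upper2[OF bdd]) simp
  then show ?thesis unfolding B_norm_def by simp
qed

lemma cnj_unit:
  fixes v :: complex
  defines "u \<equiv> (if v = 0 then 1 else cnj v / complex_of_real (cmod v))"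
  shows "cmod u \<le> 1" "u * v = complex_of_real (cmod v)"
proof -
  show "cmod u \<le> 1" unfolding u_def by (simp add: norm_divide)
  show "u * v = complex_of_real (cmod v)"
  proof (cases "v = 0")
    case False
    have "cnj v * v = complex_of_real (cmod v) ^ 2" using complex_norm_square[of v] by (simp add: mult.commute)
    then show ?thesis using False unfolding u_def by (simp add: power2_eq_square field_simps)
  qed (simp add: u_def)
qed

theorem mainTheorem11:
  fixes D :: "'a::complex_banach set" and A :: "'a \<Rightarrow> 'a"
  assumes "admits_B_calculus D A"
  shows "\<forall>x. \<forall>xs. cbl_fun xs \<longrightarrow>
    (SUP \<alpha>\<in>{0<..}. ennreal \<alpha> *
       (\<integral>\<^sup>+ \<beta>. ennreal (cmod (xs (res_inv D A (Complex \<alpha> \<beta>) (res_inv D A (Complex \<alpha> \<beta>) x)))) \<partial>lborel))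
     < \<infinity>"
proof (intro allI impI)
  fix x :: 'a and xs :: "'a \<Rightarrow> complex"
  assume xs: "cbl_fun xs"
  obtain \<Phi> where hom: "bounded_alg_hom_B \<Phi>" and res: "\<forall>z\<in>rhp. \<Phi> (r_fun z) = res_inv D A z"
    using assms unfolding admits_B_calculus_def by blast
  obtain M where M: "\<forall>f\<in>B_alg. \<forall>x. norm (\<Phi> f x) \<le> M * B_norm f * norm x"
    using hom unfolding bounded_alg_hom_B_def by blast
  have bl: "bounded_linear xs" using xs by (simp add: cbl_fun_def)
  obtain Kx where Kx: "0 < Kx" "\<And>v. norm (xs v) \<le> norm v * Kx"
    using bounded_linear.pos_bounded[OF bl] by blast
  define M' where "M' = max M 0"
  define S where "S = 8 * suminf phi1 + 32 * suminf phi2"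
  have S1: "0 \<le> suminf phi1" by (intro suminf_nonneg phi_summable phi_nonneg)
  have S2: "0 \<le> suminf phi2" by (intro suminf_nonneg phi_summable phi_nonneg)
  have S0: "0 \<le> S" unfolding S_def using S1 S2 by simp
  define Bd where "Bd = Kx * M' * S * norm x"
  have Bd0: "0 \<le> Bd" unfolding Bd_def M'_def using Kx S0 by simp
  have main: "ennreal \<alpha> *
       (\<integral>\<^sup>+ \<beta>. ennreal (cmod (xs (res_inv D A (Complex \<alpha> \<beta>) (res_inv D A (Complex \<alpha> \<beta>) x)))) \<partial>lborel)
     \<le> ennreal Bd" if a: "\<alpha> \<in> {0<..}" for \<alpha> :: real
  proof -
    from a have a: "\<alpha> > 0" by simp
    define g where "g \<beta> = cmod (xs (res_inv D A (Complex \<alpha> \<beta>) (res_inv D A (Complex \<alpha> \<beta>) x)))" for \<beta>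
    define C where "C = 8 / \<alpha>^2 * suminf phi1 + 32 * suminf phi2 * \<alpha> powr (-2)"
    have C0: "0 \<le> C" unfolding C_def using S1 S2 by simp
    define B where "B = Kx * (M' * C * norm x)"
    have B0: "0 \<le> B" unfolding B_def M'_def using Kx C0 by simp
    have gb: "(\<Sum>k\<in>K. g (t + of_int k * \<alpha>)) \<le> B" if K: "finite K" for t K
    proof -
      define v where "v k = xs (res_inv D A (zk \<alpha> t k) (res_inv D A (zk \<alpha> t k) x))" for k
      define c where "c k = (if v k = 0 then 1 else cnj (v k) / complex_of_real (cmod (v k)))" for k
      have c1: "\<And>k. cmod (c k) \<le> 1" unfolding c_def by (rule cnj_unit(1))
      have cv: "c k * v k = complex_of_real (cmod (v k))" for k unfolding c_def by (rule cnj_unit(2))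
      have gv: "g (t + of_int k * \<alpha>) = cmod (v k)" for k unfolding g_def v_def zk_def ..
      have FB: "FF \<alpha> t K c \<in> B_alg" by (rule FF_B_alg(1)[where c=c, OF a K c1])
      have FN: "B_norm (FF \<alpha> t K c) \<le> C" unfolding C_def by (rule FF_B_alg(2)[where c=c, OF a K c1])
      have FN0: "0 \<le> B_norm (FF \<alpha> t K c)" by (rule B_norm_FF_nonneg[where c=c, OF a K c1])
      have "xs (\<Phi> (FF \<alpha> t K c) x) = (\<Sum>k\<in>K. c k * v k)"
        unfolding Phi_FF[OF hom res a K c1] v_def by (rule cbl_fun_sum[OF xs K])
      also have "\<dots> = complex_of_real (\<Sum>k\<in>K. cmod (v k))" by (simp add: cv)
      finally have eq: "xs (\<Phi> (FF \<alpha> t K c) x) = complex_of_real (\<Sum>k\<in>K. cmod (v k))" .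
      have "(\<Sum>k\<in>K. g (t + of_int k * \<alpha>)) = (\<Sum>k\<in>K. cmod (v k))" by (simp add: gv)
      also have "\<dots> = cmod (xs (\<Phi> (FF \<alpha> t K c) x))" unfolding eq norm_of_real
        by (simp add: sum_nonneg)
      also have "\<dots> \<le> norm (\<Phi> (FF \<alpha> t K c) x) * Kx" by (rule Kx(2))
      also have "\<dots> \<le> (M * B_norm (FF \<alpha> t K c) * norm x) * Kx"
        using M FB Kx(1) by (intro mult_right_mono) auto
      also have "\<dots> \<le> (M' * C * norm x) * Kx"
      proof (rule mult_right_mono)
        have "M * B_norm (FF \<alpha> t K c) \<le> M' * B_norm (FF \<alpha> t K c)"
          unfolding M'_def using FN0 by (intro mult_right_mono) auto
        also have "\<dots> \<le> M' * C" unfolding M'_def using FN by (intro mult_left_mono) auto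
        finally show "M * B_norm (FF \<alpha> t K c) * norm x \<le> M' * C * norm x"
          by (intro mult_right_mono) auto
      qed (use Kx in auto)
      finally show ?thesis unfolding B_def by (simp add: mult_ac)
    qed
    have g0: "\<And>\<beta>. 0 \<le> g \<beta>" unfolding g_def by simp
    have "(\<integral>\<^sup>+ \<beta>. ennreal (g \<beta>) \<partial>lborel) \<le> ennreal (\<alpha> * B)"
      by (rule periodic_bound[OF a B0 gb g0])
    then have "ennreal \<alpha> * (\<integral>\<^sup>+ \<beta>. ennreal (g \<beta>) \<partial>lborel) \<le> ennreal \<alpha> * ennreal (\<alpha> * B)"
      by (rule mult_left_mono) simp
    also have "\<dots> = ennreal (\<alpha> * (\<alpha> * B))" using a B0 by (simp add: ennreal_mult)
    also have "\<alpha> * (\<alpha> * B) = Bd"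
    proof -
      have p: "\<alpha> powr (-2) = 1 / \<alpha>^2" using a by (simp add: powr_minus powr_numeral divide_inverse)
      have "\<alpha> * (\<alpha> * C) = S" unfolding C_def S_def p using a by (simp add: field_simps power2_eq_square)
      then show ?thesis unfolding B_def Bd_def by (metis mult.assoc mult.left_commute)
    qed
    finally show ?thesis unfolding g_def .
  qed
  have "(SUP \<alpha>\<in>{0<..}. ennreal \<alpha> *
       (\<integral>\<^sup>+ \<beta>. ennreal (cmod (xs (res_inv D A (Complex \<alpha> \<beta>) (res_inv D A (Complex \<alpha> \<beta>) x)))) \<partial>lborel))
     \<le> ennreal Bd" by (rule SUP_least) (rule main)
  also have "\<dots> < \<infinity>" by simp
  finally show "(SUP \<alpha>\<in>{0<..}. ennreal \<alpha> *
       (\<integral>\<^sup>+ \<beta>. ennreal (cmod (xs (res_inv D A (Complex \<alpha> \<beta>) (res_inv D A (Complex \<alpha> \<beta>) x)))) \<partial>lborel))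
     < \<infinity>" .
qed

end
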